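(* For every $\nu,c>0$, the function $$z\mapsto\frac{\left(H_{-\nu-c}(z)\right)^2}{H_{-\nu}(z)\,H_{-\nu-2c}(z)}$$ is decreasing on $\mathbb{R}$.
   Context: For $\nu>0$ and $z\in\mathbb{R}$, $H_{-\nu}(z)=\frac{1}{\Gamma(\nu)}\int_0^\infty e^{-t^2-2tz}t^{\nu-1}\,dt$ (Hermite function; equivalently $H_{-\nu}(z)=2^{-\nu/2}e^{z^2/2}D_{-\nu}(\sqrt2 z)$ with $D$ the parabolic cylinder function). *)

theory Defs
  imports "HOL-Analysis.Analysis"
begin

text \<open>Hermite function of negative index: for nu > 0 and real z,
  H_{-nu}(z) = 1/Gamma(nu) * integral_0^infinity exp(-t^2 - 2 t z) t^(nu-1) dt.
  The argument of hermite_neg is nu (the index is -nu).\<close>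
definition hermite_neg :: "real \<Rightarrow> real \<Rightarrow> real" where
  "hermite_neg \<nu> z =
     (1 / Gamma \<nu>) * (LBINT t:{0<..}. exp (- (t\<^sup>2) - 2 * t * z) * t powr (\<nu> - 1))"

end

theory Submission
  imports Defs
begin



lemma ennreal_half_le: "(x::ennreal) + x \<le> y + y \<Longrightarrow> x \<le> y"
  by (metis add_strict_mono linorder_not_less)

lemma prod_nn_integral:
  fixes P Q :: "real \<Rightarrow> real"
  assumes [measurable]: "P \<in> borel_measurable borel" "Q \<in> borel_measurable borel"
  shows "(\<integral>\<^sup>+x. ennreal (P x) \<partial>lborel) * (\<integral>\<^sup>+x. ennreal (Q x) \<partial>lborel)
       = (\<integral>\<^sup>+x. \<integral>\<^sup>+y. ennreal (P x) * ennreal (Q y) \<partial>lborel \<partial>lborel)"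
  by (simp add: nn_integral_cmult nn_integral_multc)

lemma sym_prod_le:
  fixes F G H J :: "real \<Rightarrow> real"
  assumes [measurable]: "F \<in> borel_measurable borel" "G \<in> borel_measurable borel"
     "H \<in> borel_measurable borel" "J \<in> borel_measurable borel"
  assumes le: "\<And>x y. H x * J y + H y * J x \<le> F x * G y + F y * G x"
    and nn: "\<And>x. F x \<ge> 0" "\<And>x. G x \<ge> 0" "\<And>x. H x \<ge> 0" "\<And>x. J x \<ge> 0"
  shows "(\<integral>\<^sup>+x. ennreal (H x) \<partial>lborel) * (\<integral>\<^sup>+x. ennreal (J x) \<partial>lborel)
       \<le> (\<integral>\<^sup>+x. ennreal (F x) \<partial>lborel) * (\<integral>\<^sup>+x. ennreal (G x) \<partial>lborel)"
proof (rule ennreal_half_le)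
  have sw: "\<And>P Q :: real \<Rightarrow> real. P \<in> borel_measurable borel \<Longrightarrow> Q \<in> borel_measurable borel \<Longrightarrow>
     (\<integral>\<^sup>+x. ennreal (P x) \<partial>lborel) * (\<integral>\<^sup>+x. ennreal (Q x) \<partial>lborel) +
     (\<integral>\<^sup>+x. ennreal (P x) \<partial>lborel) * (\<integral>\<^sup>+x. ennreal (Q x) \<partial>lborel)
     = (\<integral>\<^sup>+x. \<integral>\<^sup>+y. ennreal (P x) * ennreal (Q y) + ennreal (P y) * ennreal (Q x) \<partial>lborel \<partial>lborel)"
  proof -
    fix P Q :: "real \<Rightarrow> real"
    assume [measurable]: "P \<in> borel_measurable borel" "Q \<in> borel_measurable borel"
    have "(\<integral>\<^sup>+x. ennreal (P x) \<partial>lborel) * (\<integral>\<^sup>+x. ennreal (Q x) \<partial>lborel)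
       = (\<integral>\<^sup>+x. \<integral>\<^sup>+y. ennreal (P y) * ennreal (Q x) \<partial>lborel \<partial>lborel)"
      by (simp add: nn_integral_cmult nn_integral_multc mult_ac)
    moreover have "(\<integral>\<^sup>+x. ennreal (P x) \<partial>lborel) * (\<integral>\<^sup>+x. ennreal (Q x) \<partial>lborel)
       = (\<integral>\<^sup>+x. \<integral>\<^sup>+y. ennreal (P x) * ennreal (Q y) \<partial>lborel \<partial>lborel)"
      by (simp add: nn_integral_cmult nn_integral_multc)
    ultimately show "(\<integral>\<^sup>+x. ennreal (P x) \<partial>lborel) * (\<integral>\<^sup>+x. ennreal (Q x) \<partial>lborel) +
     (\<integral>\<^sup>+x. ennreal (P x) \<partial>lborel) * (\<integral>\<^sup>+x. ennreal (Q x) \<partial>lborel)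
     = (\<integral>\<^sup>+x. \<integral>\<^sup>+y. ennreal (P x) * ennreal (Q y) + ennreal (P y) * ennreal (Q x) \<partial>lborel \<partial>lborel)"
      by (simp add: nn_integral_add)
  qed
  show "(\<integral>\<^sup>+x. ennreal (H x) \<partial>lborel) * (\<integral>\<^sup>+x. ennreal (J x) \<partial>lborel) +
     (\<integral>\<^sup>+x. ennreal (H x) \<partial>lborel) * (\<integral>\<^sup>+x. ennreal (J x) \<partial>lborel)
   \<le> (\<integral>\<^sup>+x. ennreal (F x) \<partial>lborel) * (\<integral>\<^sup>+x. ennreal (G x) \<partial>lborel) +
     (\<integral>\<^sup>+x. ennreal (F x) \<partial>lborel) * (\<integral>\<^sup>+x. ennreal (G x) \<partial>lborel)"
    unfolding sw[of H J, OF assms(3,4)] sw[of F G, OF assms(1,2)]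
  proof (intro nn_integral_mono)
    fix x y
    show "ennreal (H x) * ennreal (J y) + ennreal (H y) * ennreal (J x)
        \<le> ennreal (F x) * ennreal (G y) + ennreal (F y) * ennreal (G x)"
      using le[of x y] nn by (simp add: ennreal_mult'[symmetric] ennreal_plus[symmetric] del: ennreal_plus)
  qed
qed



definition gI :: "real \<Rightarrow> real \<Rightarrow> real \<Rightarrow> real" where
  "gI a z t = indicator {0<..} t * (exp (- (t\<^sup>2) - 2 * t * z) * t powr (a - 1))"

definition Lk :: "real \<Rightarrow> real \<Rightarrow> real \<Rightarrow> real \<Rightarrow> real" where
  "Lk a d q s = indicator {0<..<1} s * (s powr (a - 1) * (1 - s) powr (d - 1) * exp (- (q\<^sup>2 * (s\<^sup>2 + (1 - s)\<^sup>2))))"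

lemma gI_meas[measurable]: "(\<lambda>t. gI a z t) \<in> borel_measurable borel"
  unfolding gI_def by measurable

lemma Lk_meas[measurable]: "case_prod (\<lambda>q s. Lk a d q s) \<in> borel_measurable (borel \<Otimes>\<^sub>M borel)"
  unfolding Lk_def by measurable

lemma gI_nonneg: "gI a z t \<ge> 0" unfolding gI_def by (simp add: indicator_def)
lemma Lk_nonneg: "Lk a d q s \<ge> 0" unfolding Lk_def by (simp add: indicator_def)



definition Psi :: "real \<Rightarrow> real \<Rightarrow> real" where
  "Psi c m = ((1/2 + m) / (1/2 - m)) powr c + ((1/2 - m) / (1/2 + m)) powr c"

lemma Y_plus_inv_mono:
  fixes Y1 Y2 :: real
  assumes "1 \<le> Y1" "Y1 \<le> Y2"
  shows "Y1 + 1 / Y1 \<le> Y2 + 1 / Y2"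
proof -
  have "Y2 + 1/Y2 - (Y1 + 1/Y1) = (Y2 - Y1) * (1 - 1 / (Y1 * Y2))"
    using assms by (simp add: field_simps)
  moreover have "1 / (Y1 * Y2) \<le> 1"
  proof -
    have "Y1 \<le> Y1 * Y2" using mult_left_mono[of 1 Y2 Y1] assms by simp
    then have "1 \<le> Y1 * Y2" using assms by linarith
    then show ?thesis by simp
  qed
  ultimately have "Y2 + 1/Y2 - (Y1 + 1/Y1) \<ge> 0" using assms by simp
  then show ?thesis by simp
qed

lemma Psi_mono:
  assumes c: "c \<ge> 0" and m: "0 \<le> m1" "m1 \<le> m2" "m2 < 1/2"
  shows "Psi c m1 \<le> Psi c m2"
proof -
  define X1 where "X1 = (1/2 + m1) / (1/2 - m1)"
  define X2 where "X2 = (1/2 + m2) / (1/2 - m2)"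
  have X1: "1 \<le> X1" using m unfolding X1_def by (simp add: field_simps)
  have X12: "X1 \<le> X2" using m unfolding X1_def X2_def by (intro frac_le) auto
  have inv1: "(1/2 - m1) / (1/2 + m1) = 1 / X1" unfolding X1_def by simp
  have inv2: "(1/2 - m2) / (1/2 + m2) = 1 / X2" unfolding X2_def by simp
  have Y1: "1 \<le> X1 powr c" using X1 c by (simp add: ge_one_powr_ge_zero)
  have Y12: "X1 powr c \<le> X2 powr c" using X1 X12 c by (intro powr_mono2) auto
  have "Psi c m1 = X1 powr c + 1 / X1 powr c"
    unfolding Psi_def inv1 X1_def[symmetric] using X1 by (simp add: powr_divide)
  moreover have "Psi c m2 = X2 powr c + 1 / X2 powr c"
    unfolding Psi_def inv2 X2_def[symmetric] using X1 X12 by (simp add: powr_divide)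
  ultimately show ?thesis using Y_plus_inv_mono[OF Y1 Y12] by simp
qed

lemma psi_eq:
  assumes "0 < s" "s < 1"
  shows "((1 - s) / s) powr c + (s / (1 - s)) powr c = Psi c \<bar>s - 1/2\<bar>"
proof (cases "s \<le> 1/2")
  case True
  then have "\<bar>s - 1/2\<bar> = 1/2 - s" by simp
  then show ?thesis unfolding Psi_def by simp
next
  case False
  then have "\<bar>s - 1/2\<bar> = s - 1/2" by simp
  then show ?thesis unfolding Psi_def by (simp add: add.commute)
qed

lemma core1:
  fixes c x y :: real
  assumes c: "c \<ge> 0" and x: "0 < x" "x < 1" and y: "0 < y" "y < 1"
  shows "((((1 - x) / x) powr c + (x / (1 - x)) powr c) - (((1 - y) / y) powr c + (y / (1 - y)) powr c))
         * ((x\<^sup>2 + (1 - x)\<^sup>2) - (y\<^sup>2 + (1 - y)\<^sup>2)) \<ge> 0"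
proof -
  have gx: "x\<^sup>2 + (1 - x)\<^sup>2 = 1/2 + 2 * \<bar>x - 1/2\<bar>\<^sup>2" by (simp add: power2_eq_square algebra_simps)
  have gy: "y\<^sup>2 + (1 - y)\<^sup>2 = 1/2 + 2 * \<bar>y - 1/2\<bar>\<^sup>2" by (simp add: power2_eq_square algebra_simps)
  have bx: "\<bar>x - 1/2\<bar> < 1/2" "\<bar>y - 1/2\<bar> < 1/2" using x y by (auto simp: abs_if)
  show ?thesis unfolding psi_eq[OF x] psi_eq[OF y] gx gy
  proof (cases "\<bar>x - 1/2\<bar> \<le> \<bar>y - 1/2\<bar>")
    case True
    then have "Psi c \<bar>x - 1/2\<bar> \<le> Psi c \<bar>y - 1/2\<bar>" using Psi_mono[OF c _ True] bx by simp
    moreover have "\<bar>x - 1/2\<bar>\<^sup>2 \<le> \<bar>y - 1/2\<bar>\<^sup>2" using power_mono[OF True, of 2] by simp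
    ultimately show "0 \<le> (Psi c \<bar>x - 1 / 2\<bar> - Psi c \<bar>y - 1 / 2\<bar>) *
         (1 / 2 + 2 * \<bar>x - 1 / 2\<bar>\<^sup>2 - (1 / 2 + 2 * \<bar>y - 1 / 2\<bar>\<^sup>2))"
      by (intro mult_nonpos_nonpos) auto
  next
    case False
    then have F: "\<bar>y - 1/2\<bar> \<le> \<bar>x - 1/2\<bar>" by simp
    then have "Psi c \<bar>y - 1/2\<bar> \<le> Psi c \<bar>x - 1/2\<bar>" using Psi_mono[OF c _ F] bx by simp
    moreover have "\<bar>y - 1/2\<bar>\<^sup>2 \<le> \<bar>x - 1/2\<bar>\<^sup>2" using power_mono[OF F, of 2] by simp
    ultimately show "0 \<le> (Psi c \<bar>x - 1 / 2\<bar> - Psi c \<bar>y - 1 / 2\<bar>) *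
         (1 / 2 + 2 * \<bar>x - 1 / 2\<bar>\<^sup>2 - (1 / 2 + 2 * \<bar>y - 1 / 2\<bar>\<^sup>2))"
      by (intro mult_nonneg_nonneg) auto
  qed
qed

lemma core2:
  fixes q1 q2 gx gy :: real
  assumes "q1\<^sup>2 \<le> q2\<^sup>2"
  shows "(exp (-(q1\<^sup>2 * gx)) * exp (-(q2\<^sup>2 * gy)) - exp (-(q2\<^sup>2 * gx)) * exp (-(q1\<^sup>2 * gy))) * (gx - gy) \<ge> 0"
proof (cases "gx \<ge> gy")
  case True
  have "(q2\<^sup>2 - q1\<^sup>2) * (gx - gy) \<ge> 0" using assms True by simp
  then have "-(q2\<^sup>2 * gx) + -(q1\<^sup>2 * gy) \<le> -(q1\<^sup>2 * gx) + -(q2\<^sup>2 * gy)" by (simp add: algebra_simps)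
  then have "exp (-(q2\<^sup>2 * gx)) * exp (-(q1\<^sup>2 * gy)) \<le> exp (-(q1\<^sup>2 * gx)) * exp (-(q2\<^sup>2 * gy))"
    by (simp add: exp_add[symmetric])
  then show ?thesis using True by (intro mult_nonneg_nonneg) auto
next
  case False
  have "(q2\<^sup>2 - q1\<^sup>2) * (gy - gx) \<ge> 0" using assms False by simp
  then have "-(q1\<^sup>2 * gx) + -(q2\<^sup>2 * gy) \<le> -(q2\<^sup>2 * gx) + -(q1\<^sup>2 * gy)" by (simp add: algebra_simps)
  then have "exp (-(q1\<^sup>2 * gx)) * exp (-(q2\<^sup>2 * gy)) \<le> exp (-(q2\<^sup>2 * gx)) * exp (-(q1\<^sup>2 * gy))"
    by (simp add: exp_add[symmetric])
  then show ?thesis using False by (intro mult_nonpos_nonpos) auto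
qed

lemma sign_comb:
  fixes A B D :: real
  assumes "A * D \<ge> 0" "B * D \<ge> 0" "D = 0 \<Longrightarrow> B = 0"
  shows "A * B \<ge> 0"
proof (cases "D > 0")
  case True
  then have "A \<ge> 0" "B \<ge> 0" using assms by (auto simp: zero_le_mult_iff)
  then show ?thesis by simp
next
  case False
  show ?thesis
  proof (cases "D = 0")
    case True then show ?thesis using assms by simp
  next
    case False
    with \<open>\<not> D > 0\<close> have "D < 0" by simp
    then have "A \<le> 0" "B \<le> 0" using assms by (auto simp: zero_le_mult_iff)
    then show ?thesis by (simp add: mult_nonpos_nonpos)
  qed
qed


definition Aq :: "real \<Rightarrow> real \<Rightarrow> real \<Rightarrow> real \<Rightarrow> real" where
  "Aq b c q s = Lk (b - c) (b + c) q s + Lk (b + c) (b - c) q s"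
definition Kq :: "real \<Rightarrow> real \<Rightarrow> real \<Rightarrow> real" where
  "Kq b q s = Lk b b q s + Lk b b q s"

lemma Lk_meas1[measurable]: "(\<lambda>s. Lk a d q s) \<in> borel_measurable borel"
  unfolding Lk_def by measurable
lemma Aq_meas[measurable]: "(\<lambda>s. Aq b c q s) \<in> borel_measurable borel"
  unfolding Aq_def by measurable
lemma Kq_meas[measurable]: "(\<lambda>s. Kq b q s) \<in> borel_measurable borel"
  unfolding Kq_def by measurable
lemma Aq_nonneg: "Aq b c q s \<ge> 0" unfolding Aq_def by (simp add: Lk_nonneg add_nonneg_nonneg)
lemma Kq_nonneg: "Kq b q s \<ge> 0" unfolding Kq_def by (simp add: Lk_nonneg add_nonneg_nonneg)

lemma Aq_fact:
  assumes "0 < s" "s < 1"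
  shows "Aq b c q s = (s powr (b - 1) * (1 - s) powr (b - 1)) * (((1 - s) / s) powr c + (s / (1 - s)) powr c)
                      * exp (- (q\<^sup>2 * (s\<^sup>2 + (1 - s)\<^sup>2)))"
proof -
  have s1: "1 - s > 0" using assms by simp
  have e1: "s powr (b - c - 1) = s powr (b - 1) / s powr c"
    using assms by (simp add: powr_diff[symmetric] algebra_simps)
  have e2: "(1 - s) powr (b + c - 1) = (1 - s) powr (b - 1) * (1 - s) powr c"
    using s1 by (simp add: powr_add[symmetric] algebra_simps)
  have e3: "s powr (b + c - 1) = s powr (b - 1) * s powr c"
    using assms by (simp add: powr_add[symmetric] algebra_simps)
  have e4: "(1 - s) powr (b - c - 1) = (1 - s) powr (b - 1) / (1 - s) powr c"
    using s1 by (simp add: powr_diff[symmetric] algebra_simps)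
  show ?thesis
    unfolding Aq_def Lk_def e1 e2 e3 e4 using assms s1
    by (simp add: powr_divide field_simps)
qed

lemma Kq_fact:
  assumes "0 < s" "s < 1"
  shows "Kq b q s = 2 * (s powr (b - 1) * (1 - s) powr (b - 1)) * exp (- (q\<^sup>2 * (s\<^sup>2 + (1 - s)\<^sup>2)))"
  unfolding Kq_def Lk_def using assms by simp

lemma Aq_out: "\<not> (0 < s \<and> s < 1) \<Longrightarrow> Aq b c q s = 0"
  unfolding Aq_def Lk_def by (auto simp: indicator_def)
lemma Kq_out: "\<not> (0 < s \<and> s < 1) \<Longrightarrow> Kq b q s = 0"
  unfolding Kq_def Lk_def by (auto simp: indicator_def)

lemma stepA_pt:
  fixes b c q1 q2 x y :: real
  assumes c: "c \<ge> 0" and q: "q1\<^sup>2 \<le> q2\<^sup>2"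
  shows "Aq b c q2 x * Kq b q1 y + Aq b c q2 y * Kq b q1 x \<le> Aq b c q1 x * Kq b q2 y + Aq b c q1 y * Kq b q2 x"
proof (cases "(0 < x \<and> x < 1) \<and> (0 < y \<and> y < 1)")
  case False
  then show ?thesis by (auto simp: Aq_out Kq_out)
next
  case True
  then have x: "0 < x" "x < 1" and y: "0 < y" "y < 1" by auto
  define Px where "Px = x powr (b - 1) * (1 - x) powr (b - 1)"
  define Py where "Py = y powr (b - 1) * (1 - y) powr (b - 1)"
  define px where "px = ((1 - x) / x) powr c + (x / (1 - x)) powr c"
  define py where "py = ((1 - y) / y) powr c + (y / (1 - y)) powr c"
  define gx where "gx = x\<^sup>2 + (1 - x)\<^sup>2"
  define gy where "gy = y\<^sup>2 + (1 - y)\<^sup>2"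
  define E1x where "E1x = exp (- (q1\<^sup>2 * gx))"
  define E2x where "E2x = exp (- (q2\<^sup>2 * gx))"
  define E1y where "E1y = exp (- (q1\<^sup>2 * gy))"
  define E2y where "E2y = exp (- (q2\<^sup>2 * gy))"
  have PP: "Px \<ge> 0" "Py \<ge> 0" unfolding Px_def Py_def by simp_all
  have A1: "(px - py) * (gx - gy) \<ge> 0" unfolding px_def py_def gx_def gy_def by (rule core1[OF c x y])
  have A2: "(E1x * E2y - E2x * E1y) * (gx - gy) \<ge> 0"
    unfolding E1x_def E2x_def E1y_def E2y_def by (rule core2[OF q])
  have A3: "gx - gy = 0 \<Longrightarrow> E1x * E2y - E2x * E1y = 0"
    unfolding E1x_def E2x_def E1y_def E2y_def by (simp add: mult.commute)
  have S: "(px - py) * (E1x * E2y - E2x * E1y) \<ge> 0" by (rule sign_comb[OF A1 A2 A3])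
  have "Aq b c q1 x * Kq b q2 y + Aq b c q1 y * Kq b q2 x - (Aq b c q2 x * Kq b q1 y + Aq b c q2 y * Kq b q1 x)
      = 2 * Px * Py * ((px - py) * (E1x * E2y - E2x * E1y))"
    unfolding Aq_fact[OF x] Aq_fact[OF y] Kq_fact[OF x] Kq_fact[OF y]
    unfolding Px_def[symmetric] Py_def[symmetric] px_def[symmetric] py_def[symmetric]
      gx_def[symmetric] gy_def[symmetric] E1x_def[symmetric] E2x_def[symmetric] E1y_def[symmetric] E2y_def[symmetric]
    by (simp add: algebra_simps)
  moreover have "2 * Px * Py * ((px - py) * (E1x * E2y - E2x * E1y)) \<ge> 0"
    using PP S by simp
  ultimately show ?thesis by linarith
qed

lemma stepA:
  fixes b c q1 q2 :: real
  assumes c: "c \<ge> 0" and q: "0 \<le> q1" "q1 \<le> q2"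
  shows "(\<integral>\<^sup>+s. ennreal (Aq b c q2 s) \<partial>lborel) * (\<integral>\<^sup>+s. ennreal (Kq b q1 s) \<partial>lborel)
       \<le> (\<integral>\<^sup>+s. ennreal (Aq b c q1 s) \<partial>lborel) * (\<integral>\<^sup>+s. ennreal (Kq b q2 s) \<partial>lborel)"
proof (rule sym_prod_le)
  have "q1\<^sup>2 \<le> q2\<^sup>2" using q by (simp add: power_mono)
  then show "\<And>x y. Aq b c q2 x * Kq b q1 y + Aq b c q2 y * Kq b q1 x \<le> Aq b c q1 x * Kq b q2 y + Aq b c q1 y * Kq b q2 x"
    by (rule stepA_pt[OF c])
qed (auto simp: Aq_nonneg Kq_nonneg)

lemma inner_scale:
  assumes q: "q > 0"
  shows "(\<integral>\<^sup>+s. ennreal (gI a z s * gI d z (q - s)) \<partial>lborel)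
       = ennreal (exp (-2*z*q) * q powr (a + d - 1)) * (\<integral>\<^sup>+s. ennreal (Lk a d q s) \<partial>lborel)"
proof -
  have "(\<integral>\<^sup>+s. ennreal (gI a z s * gI d z (q - s)) \<partial>lborel)
      = ennreal q * (\<integral>\<^sup>+s. ennreal (gI a z (0 + q * s) * gI d z (q - (0 + q * s))) \<partial>lborel)"
    using q by (subst nn_integral_real_affine[where c=q and t=0]) auto
  also have "(\<lambda>s. ennreal (gI a z (0 + q * s) * gI d z (q - (0 + q * s))))
     = (\<lambda>s. ennreal (exp (-2*z*q) * (q powr (a - 1) * q powr (d - 1))) * ennreal (Lk a d q s))"
  proof
    fix s
    show "ennreal (gI a z (0 + q * s) * gI d z (q - (0 + q * s))) =
         ennreal (exp (-2*z*q) * (q powr (a - 1) * q powr (d - 1))) * ennreal (Lk a d q s)"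
    proof (cases "0 < s \<and> s < 1")
      case True
      have e: "q - (0 + q * s) = q * (1 - s)" by (simp add: algebra_simps)
      have p1: "(0 + q * s) powr (a - 1) = q powr (a - 1) * s powr (a - 1)"
        using True q by (simp add: powr_mult)
      have p2: "(q - (0 + q * s)) powr (d - 1) = q powr (d - 1) * (1 - s) powr (d - 1)"
        using True q unfolding e by (simp add: powr_mult)
      have ex: "exp (- (0 + q * s)\<^sup>2 - 2 * (0 + q * s) * z) * exp (- (q - (0 + q * s))\<^sup>2 - 2 * (q - (0 + q * s)) * z)
          = exp (-2*z*q) * exp (- (q\<^sup>2 * (s\<^sup>2 + (1 - s)\<^sup>2)))"
        unfolding exp_add[symmetric] by (rule arg_cong[where f=exp]) (simp add: power2_eq_square algebra_simps)
      have pos1: "0 + q * s > 0" "q - (0 + q * s) > 0" using True q by (auto simp: e)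
      have "gI a z (0 + q * s) * gI d z (q - (0 + q * s))
          = (exp (- (0 + q * s)\<^sup>2 - 2 * (0 + q * s) * z) * exp (- (q - (0 + q * s))\<^sup>2 - 2 * (q - (0 + q * s)) * z))
            * ((0 + q * s) powr (a - 1) * (q - (0 + q * s)) powr (d - 1))"
        unfolding gI_def using pos1 by (simp add: algebra_simps)
      also have "\<dots> = exp (-2*z*q) * (q powr (a - 1) * q powr (d - 1)) * Lk a d q s"
        unfolding ex p1 p2 Lk_def using True by (simp add: algebra_simps)
      finally have "gI a z (0 + q * s) * gI d z (q - (0 + q * s))
          = exp (-2*z*q) * (q powr (a - 1) * q powr (d - 1)) * Lk a d q s" .
      then show ?thesis using True q by (simp add: ennreal_mult'[symmetric] Lk_nonneg)
    next
      case False
      then have "gI a z (0 + q * s) * gI d z (q - (0 + q * s)) = 0" "Lk a d q s = 0"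
        using q unfolding gI_def Lk_def
        by (auto simp: indicator_def not_less mult_le_0_iff algebra_simps
           intro: mult_nonneg_nonpos mult_left_mono[of 1 s q, simplified])
      then show ?thesis by auto
    qed
  qed
  also have "ennreal q * (\<integral>\<^sup>+s. ennreal (exp (-2*z*q) * (q powr (a - 1) * q powr (d - 1))) * ennreal (Lk a d q s) \<partial>lborel)
     = ennreal (q * (exp (-2*z*q) * (q powr (a - 1) * q powr (d - 1)))) * (\<integral>\<^sup>+s. ennreal (Lk a d q s) \<partial>lborel)"
  proof -
    have "(\<integral>\<^sup>+s. ennreal (exp (-2*z*q) * (q powr (a - 1) * q powr (d - 1))) * ennreal (Lk a d q s) \<partial>lborel)
       = ennreal (exp (-2*z*q) * (q powr (a - 1) * q powr (d - 1))) * (\<integral>\<^sup>+s. ennreal (Lk a d q s) \<partial>lborel)"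
      by (rule nn_integral_cmult) measurable
    then show ?thesis using q by (simp add: ennreal_mult' mult.assoc)
  qed
  also have "q * (exp (-2*z*q) * (q powr (a - 1) * q powr (d - 1))) = exp (-2*z*q) * q powr (a + d - 1)"
    using q by (simp add: powr_add[symmetric] algebra_simps powr_mult_base)
  finally show ?thesis .
qed

lemma conv:
  "(\<integral>\<^sup>+t. ennreal (gI a z t) \<partial>lborel) * (\<integral>\<^sup>+t. ennreal (gI d z t) \<partial>lborel)
   = (\<integral>\<^sup>+q. ennreal (indicator {0<..} q * (exp (-2*z*q) * q powr (a + d - 1))) * (\<integral>\<^sup>+s. ennreal (Lk a d q s) \<partial>lborel) \<partial>lborel)"
proof -
  have "(\<integral>\<^sup>+t. ennreal (gI a z t) \<partial>lborel) * (\<integral>\<^sup>+t. ennreal (gI d z t) \<partial>lborel)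
      = (\<integral>\<^sup>+s. \<integral>\<^sup>+t. ennreal (gI a z s * gI d z t) \<partial>lborel \<partial>lborel)"
    by (subst prod_nn_integral) (auto intro!: nn_integral_cong simp: ennreal_mult' gI_nonneg)
  also have "\<dots> = (\<integral>\<^sup>+s. \<integral>\<^sup>+q. ennreal (gI a z s * gI d z (q - s)) \<partial>lborel \<partial>lborel)"
  proof (rule nn_integral_cong)
    fix s
    show "(\<integral>\<^sup>+t. ennreal (gI a z s * gI d z t) \<partial>lborel) = (\<integral>\<^sup>+q. ennreal (gI a z s * gI d z (q - s)) \<partial>lborel)"
      by (subst nn_integral_real_affine[where c=1 and t="-s"]) (auto simp: algebra_simps)
  qed
  also have "\<dots> = (\<integral>\<^sup>+q. \<integral>\<^sup>+s. ennreal (gI a z s * gI d z (q - s)) \<partial>lborel \<partial>lborel)"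
    by (subst lborel_pair.Fubini') (auto simp: case_prod_unfold)
  also have "\<dots> = (\<integral>\<^sup>+q. ennreal (indicator {0<..} q * (exp (-2*z*q) * q powr (a + d - 1))) * (\<integral>\<^sup>+s. ennreal (Lk a d q s) \<partial>lborel) \<partial>lborel)"
  proof (rule nn_integral_cong)
    fix q :: real
    show "(\<integral>\<^sup>+s. ennreal (gI a z s * gI d z (q - s)) \<partial>lborel) =
          ennreal (indicator {0<..} q * (exp (-2*z*q) * q powr (a + d - 1))) * (\<integral>\<^sup>+s. ennreal (Lk a d q s) \<partial>lborel)"
    proof (cases "q > 0")
      case True
      then show ?thesis by (simp add: inner_scale)
    next
      case False
      have "(\<lambda>s. ennreal (gI a z s * gI d z (q - s))) = (\<lambda>s. 0)"
        using False unfolding gI_def by (auto simp: indicator_def fun_eq_iff)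
      then show ?thesis using False by simp
    qed
  qed
  finally show ?thesis .
qed

lemma gI_bound: "gI a z t \<le> exp ((1 - 2*z)\<^sup>2 / 4) * (indicator {0..} t * t powr (a - 1) / exp t)"
proof (cases "t > 0")
  case True
  have "- (t\<^sup>2) - 2 * t * z \<le> (1 - 2*z)\<^sup>2 / 4 + (- t)"
  proof -
    have "0 \<le> (t - (1 - 2*z)/2)\<^sup>2" by simp
    moreover have "(t - (1 - 2*z)/2)\<^sup>2 = t\<^sup>2 - t + 2*t*z + (1 - 2*z)\<^sup>2 / 4"
      by (simp add: power2_eq_square field_simps)
    ultimately show ?thesis by linarith
  qed
  then have "exp (- (t\<^sup>2) - 2 * t * z) \<le> exp ((1 - 2*z)\<^sup>2 / 4) * exp (- t)"
    by (simp add: exp_add[symmetric])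
  then have "exp (- (t\<^sup>2) - 2 * t * z) * t powr (a - 1) \<le> exp ((1 - 2*z)\<^sup>2 / 4) * exp (- t) * t powr (a - 1)"
    by (rule mult_right_mono) simp
  then show ?thesis using True unfolding gI_def by (simp add: exp_minus field_simps)
qed (simp add: gI_def indicator_def)

lemma gI_nn_finite:
  assumes "a > 0"
  shows "(\<integral>\<^sup>+t. ennreal (gI a z t) \<partial>lborel) < \<infinity>"
proof -
  have "(\<integral>\<^sup>+t. ennreal (gI a z t) \<partial>lborel)
     \<le> (\<integral>\<^sup>+t. ennreal (exp ((1 - 2*z)\<^sup>2 / 4)) * ennreal (indicator {0..} t * t powr (a - 1) / exp t) \<partial>lborel)"
  proof (intro nn_integral_mono)
    fix t
    have "ennreal (gI a z t) \<le> ennreal (exp ((1 - 2*z)\<^sup>2 / 4) * (indicator {0..} t * t powr (a - 1) / exp t))"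
      by (rule ennreal_leI) (rule gI_bound)
    also have "\<dots> = ennreal (exp ((1 - 2*z)\<^sup>2 / 4)) * ennreal (indicator {0..} t * t powr (a - 1) / exp t)"
      by (rule ennreal_mult') simp
    finally show "ennreal (gI a z t) \<le> ennreal (exp ((1 - 2*z)\<^sup>2 / 4)) * ennreal (indicator {0..} t * t powr (a - 1) / exp t)" .
  qed
  also have "\<dots> = ennreal (exp ((1 - 2*z)\<^sup>2 / 4)) * Gamma a"
    using assms by (subst nn_integral_cmult) (auto simp: Gamma_conv_nn_integral_real)
  also have "\<dots> < \<infinity>" by (simp add: ennreal_mult_less_top)
  finally show ?thesis .
qed

lemma gI_integrable:
  assumes "a > 0"
  shows "integrable lborel (gI a z)"
  using gI_nn_finite[OF assms, of z] by (subst integrable_iff_bounded) (simp add: gI_nonneg)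

lemma N_eq:
  assumes "a > 0"
  shows "(\<integral>\<^sup>+t. ennreal (gI a z t) \<partial>lborel) = ennreal (integral\<^sup>L lborel (gI a z))"
  by (rule nn_integral_eq_integral[OF gI_integrable[OF assms]]) (simp add: gI_nonneg)

lemma N_nonzero:
  "(\<integral>\<^sup>+t. ennreal (gI a z t) \<partial>lborel) \<noteq> 0"
proof
  assume "(\<integral>\<^sup>+t. ennreal (gI a z t) \<partial>lborel) = 0"
  then have "AE t in lborel. ennreal (gI a z t) = 0" by (subst (asm) nn_integral_0_iff_AE) auto
  then have "AE t in lborel. t \<notin> {1..2::real}"
    by eventually_elim (auto simp: gI_def indicator_def)
  then have "{1..2::real} \<in> null_sets lborel" by (subst AE_iff_null_sets) auto
  then show False using emeasure_lborel_Icc[of 1 "2::real"] by (auto simp: null_sets_def)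
qed

lemma I_pos:
  assumes "a > 0"
  shows "integral\<^sup>L lborel (gI a z) > 0"
proof -
  have "integral\<^sup>L lborel (gI a z) \<ge> 0" by (rule integral_nonneg_AE) (simp add: gI_nonneg)
  moreover have "integral\<^sup>L lborel (gI a z) \<noteq> 0"
    using N_nonzero[of a z] N_eq[OF assms, of z] by auto
  ultimately show ?thesis by simp
qed

lemma Lk_fin:
  assumes "a > 0" "d > 0"
  shows "(\<integral>\<^sup>+s. ennreal (Lk a d q s) \<partial>lborel) < \<infinity>"
proof -
  have "integrable lborel (\<lambda>s. indicator {0..1} s *\<^sub>R (s powr (a - 1) * (1 - s) powr (d - 1)))"
    using integrable_Beta[OF assms] unfolding set_integrable_def .
  then have fin: "(\<integral>\<^sup>+s. ennreal (norm (indicator {0..1} s *\<^sub>R (s powr (a - 1) * (1 - s) powr (d - 1)))) \<partial>lborel) < \<infinity>"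
    by (simp add: integrable_iff_bounded)
  have "(\<integral>\<^sup>+s. ennreal (Lk a d q s) \<partial>lborel)
     \<le> (\<integral>\<^sup>+s. ennreal (norm (indicator {0..1} s *\<^sub>R (s powr (a - 1) * (1 - s) powr (d - 1)))) \<partial>lborel)"
  proof (intro nn_integral_mono ennreal_leI)
    fix s :: real
    show "Lk a d q s \<le> norm (indicator {0..1} s *\<^sub>R (s powr (a - 1) * (1 - s) powr (d - 1)))"
    proof (cases "0 < s \<and> s < 1")
      case True
      have "q\<^sup>2 * (s\<^sup>2 + (1 - s)\<^sup>2) \<ge> 0" by simp
      then have "exp (- (q\<^sup>2 * (s\<^sup>2 + (1 - s)\<^sup>2))) \<le> 1" by simp
      then have "s powr (a - 1) * (1 - s) powr (d - 1) * exp (- (q\<^sup>2 * (s\<^sup>2 + (1 - s)\<^sup>2)))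
           \<le> s powr (a - 1) * (1 - s) powr (d - 1)"
        by (intro mult_left_le) auto
      then show ?thesis using True unfolding Lk_def by (simp add: indicator_def)
    next
      case False
      then show ?thesis unfolding Lk_def by (simp add: indicator_def)
    qed
  qed
  then show ?thesis using fin by (rule le_less_trans)
qed

lemma Aq_int_fin:
  assumes "b - c > 0" "b + c > 0"
  shows "(\<integral>\<^sup>+s. ennreal (Aq b c q s) \<partial>lborel) < \<infinity>"
proof -
  have "(\<integral>\<^sup>+s. ennreal (Aq b c q s) \<partial>lborel)
     = (\<integral>\<^sup>+s. ennreal (Lk (b - c) (b + c) q s) \<partial>lborel) + (\<integral>\<^sup>+s. ennreal (Lk (b + c) (b - c) q s) \<partial>lborel)"
    unfolding Aq_def by (subst nn_integral_add[symmetric]) (auto simp: Lk_nonneg)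
  then show ?thesis using Lk_fin[OF assms, of q] Lk_fin[OF assms(2,1), of q] by simp
qed

lemma Kq_int_fin:
  assumes "b > 0"
  shows "(\<integral>\<^sup>+s. ennreal (Kq b q s) \<partial>lborel) < \<infinity>"
proof -
  have "(\<integral>\<^sup>+s. ennreal (Kq b q s) \<partial>lborel)
     = (\<integral>\<^sup>+s. ennreal (Lk b b q s) \<partial>lborel) + (\<integral>\<^sup>+s. ennreal (Lk b b q s) \<partial>lborel)"
  proof -
    have "\<And>s. ennreal (Kq b q s) = ennreal (Lk b b q s) + ennreal (Lk b b q s)"
      unfolding Kq_def by (rule ennreal_plus) (simp_all add: Lk_nonneg)
    then show ?thesis by (subst nn_integral_add[symmetric]) auto
  qed
  then show ?thesis using Lk_fin[OF assms assms, of q] by simp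
qed

definition alpha :: "real \<Rightarrow> real \<Rightarrow> real \<Rightarrow> real" where
  "alpha b z q = indicator {0<..} q * (exp (-2*z*q) * q powr (2 * b - 1))"

lemma alpha_meas[measurable]: "(\<lambda>q. alpha b z q) \<in> borel_measurable borel"
  unfolding alpha_def by measurable
lemma alpha_nonneg: "alpha b z q \<ge> 0" unfolding alpha_def by (simp add: indicator_def)

lemma Lk_meas2[measurable]: "(\<lambda>q. \<integral>\<^sup>+s. ennreal (Lk a d q s) \<partial>lborel) \<in> borel_measurable borel"
  by measurable
lemma Aq_meas2[measurable]: "(\<lambda>q. \<integral>\<^sup>+s. ennreal (Aq b c q s) \<partial>lborel) \<in> borel_measurable borel"
  unfolding Aq_def by measurable
lemma Kq_meas2[measurable]: "(\<lambda>q. \<integral>\<^sup>+s. ennreal (Kq b q s) \<partial>lborel) \<in> borel_measurable borel"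
  unfolding Kq_def by measurable

lemma A_eq:
  "(\<integral>\<^sup>+t. ennreal (gI (b - c) z t) \<partial>lborel) * (\<integral>\<^sup>+t. ennreal (gI (b + c) z t) \<partial>lborel)
   + (\<integral>\<^sup>+t. ennreal (gI (b + c) z t) \<partial>lborel) * (\<integral>\<^sup>+t. ennreal (gI (b - c) z t) \<partial>lborel)
   = (\<integral>\<^sup>+q. ennreal (alpha b z q) * (\<integral>\<^sup>+s. ennreal (Aq b c q s) \<partial>lborel) \<partial>lborel)"
proof -
  have e1: "b - c + (b + c) - 1 = 2 * b - 1" "b + c + (b - c) - 1 = 2 * b - 1" by simp_all
  have "(\<integral>\<^sup>+t. ennreal (gI (b - c) z t) \<partial>lborel) * (\<integral>\<^sup>+t. ennreal (gI (b + c) z t) \<partial>lborel)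
   + (\<integral>\<^sup>+t. ennreal (gI (b + c) z t) \<partial>lborel) * (\<integral>\<^sup>+t. ennreal (gI (b - c) z t) \<partial>lborel)
   = (\<integral>\<^sup>+q. ennreal (alpha b z q) * (\<integral>\<^sup>+s. ennreal (Lk (b - c) (b + c) q s) \<partial>lborel) \<partial>lborel)
   + (\<integral>\<^sup>+q. ennreal (alpha b z q) * (\<integral>\<^sup>+s. ennreal (Lk (b + c) (b - c) q s) \<partial>lborel) \<partial>lborel)"
    unfolding conv e1 alpha_def by simp
  also have "\<dots> = (\<integral>\<^sup>+q. ennreal (alpha b z q) * (\<integral>\<^sup>+s. ennreal (Lk (b - c) (b + c) q s) \<partial>lborel)
       + ennreal (alpha b z q) * (\<integral>\<^sup>+s. ennreal (Lk (b + c) (b - c) q s) \<partial>lborel) \<partial>lborel)"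
    by (subst nn_integral_add) auto
  also have "\<dots> = (\<integral>\<^sup>+q. ennreal (alpha b z q) * (\<integral>\<^sup>+s. ennreal (Aq b c q s) \<partial>lborel) \<partial>lborel)"
  proof (rule nn_integral_cong)
    fix q
    have "(\<integral>\<^sup>+s. ennreal (Aq b c q s) \<partial>lborel)
     = (\<integral>\<^sup>+s. ennreal (Lk (b - c) (b + c) q s) \<partial>lborel) + (\<integral>\<^sup>+s. ennreal (Lk (b + c) (b - c) q s) \<partial>lborel)"
      unfolding Aq_def by (subst nn_integral_add[symmetric]) (auto simp: Lk_nonneg)
    then show "ennreal (alpha b z q) * (\<integral>\<^sup>+s. ennreal (Lk (b - c) (b + c) q s) \<partial>lborel)
       + ennreal (alpha b z q) * (\<integral>\<^sup>+s. ennreal (Lk (b + c) (b - c) q s) \<partial>lborel)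
       = ennreal (alpha b z q) * (\<integral>\<^sup>+s. ennreal (Aq b c q s) \<partial>lborel)"
      by (simp add: distrib_left)
  qed
  finally show ?thesis .
qed

lemma B_eq:
  "(\<integral>\<^sup>+t. ennreal (gI b z t) \<partial>lborel) * (\<integral>\<^sup>+t. ennreal (gI b z t) \<partial>lborel)
   + (\<integral>\<^sup>+t. ennreal (gI b z t) \<partial>lborel) * (\<integral>\<^sup>+t. ennreal (gI b z t) \<partial>lborel)
   = (\<integral>\<^sup>+q. ennreal (alpha b z q) * (\<integral>\<^sup>+s. ennreal (Kq b q s) \<partial>lborel) \<partial>lborel)"
proof -
  have e1: "b + b - 1 = 2 * b - 1" by simp
  have "(\<integral>\<^sup>+t. ennreal (gI b z t) \<partial>lborel) * (\<integral>\<^sup>+t. ennreal (gI b z t) \<partial>lborel)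
   + (\<integral>\<^sup>+t. ennreal (gI b z t) \<partial>lborel) * (\<integral>\<^sup>+t. ennreal (gI b z t) \<partial>lborel)
   = (\<integral>\<^sup>+q. ennreal (alpha b z q) * (\<integral>\<^sup>+s. ennreal (Lk b b q s) \<partial>lborel) \<partial>lborel)
   + (\<integral>\<^sup>+q. ennreal (alpha b z q) * (\<integral>\<^sup>+s. ennreal (Lk b b q s) \<partial>lborel) \<partial>lborel)"
    unfolding conv e1 alpha_def by simp
  also have "\<dots> = (\<integral>\<^sup>+q. ennreal (alpha b z q) * (\<integral>\<^sup>+s. ennreal (Lk b b q s) \<partial>lborel)
       + ennreal (alpha b z q) * (\<integral>\<^sup>+s. ennreal (Lk b b q s) \<partial>lborel) \<partial>lborel)"
    by (subst nn_integral_add) auto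
  also have "\<dots> = (\<integral>\<^sup>+q. ennreal (alpha b z q) * (\<integral>\<^sup>+s. ennreal (Kq b q s) \<partial>lborel) \<partial>lborel)"
  proof (rule nn_integral_cong)
    fix q
    have "(\<integral>\<^sup>+s. ennreal (Kq b q s) \<partial>lborel)
     = (\<integral>\<^sup>+s. ennreal (Lk b b q s) \<partial>lborel) + (\<integral>\<^sup>+s. ennreal (Lk b b q s) \<partial>lborel)"
    proof -
      have "\<And>s. ennreal (Kq b q s) = ennreal (Lk b b q s) + ennreal (Lk b b q s)"
        unfolding Kq_def by (rule ennreal_plus) (simp_all add: Lk_nonneg)
      then show ?thesis by (subst nn_integral_add[symmetric]) auto
    qed
    then show "ennreal (alpha b z q) * (\<integral>\<^sup>+s. ennreal (Lk b b q s) \<partial>lborel)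
       + ennreal (alpha b z q) * (\<integral>\<^sup>+s. ennreal (Lk b b q s) \<partial>lborel)
       = ennreal (alpha b z q) * (\<integral>\<^sup>+s. ennreal (Kq b q s) \<partial>lborel)"
      by (simp add: distrib_left)
  qed
  finally show ?thesis .
qed


lemma stepA_real:
  fixes b c x y :: real
  assumes bc: "b - c > 0" "b + c > 0" "c \<ge> 0" and xy: "0 \<le> x" "x \<le> y"
  shows "enn2real (\<integral>\<^sup>+s. ennreal (Aq b c y s) \<partial>lborel) * enn2real (\<integral>\<^sup>+s. ennreal (Kq b x s) \<partial>lborel)
       \<le> enn2real (\<integral>\<^sup>+s. ennreal (Aq b c x s) \<partial>lborel) * enn2real (\<integral>\<^sup>+s. ennreal (Kq b y s) \<partial>lborel)"
proof -
  have b: "b > 0" using bc by simp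
  have le: "(\<integral>\<^sup>+s. ennreal (Aq b c y s) \<partial>lborel) * (\<integral>\<^sup>+s. ennreal (Kq b x s) \<partial>lborel)
       \<le> (\<integral>\<^sup>+s. ennreal (Aq b c x s) \<partial>lborel) * (\<integral>\<^sup>+s. ennreal (Kq b y s) \<partial>lborel)"
    by (rule stepA[OF bc(3) xy])
  have f: "(\<integral>\<^sup>+s. ennreal (Aq b c x s) \<partial>lborel) * (\<integral>\<^sup>+s. ennreal (Kq b y s) \<partial>lborel) < \<infinity>"
    using Aq_int_fin[OF bc(1,2), of x] Kq_int_fin[OF b, of y] by (simp add: ennreal_mult_less_top)
  have "enn2real ((\<integral>\<^sup>+s. ennreal (Aq b c y s) \<partial>lborel) * (\<integral>\<^sup>+s. ennreal (Kq b x s) \<partial>lborel))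
       \<le> enn2real ((\<integral>\<^sup>+s. ennreal (Aq b c x s) \<partial>lborel) * (\<integral>\<^sup>+s. ennreal (Kq b y s) \<partial>lborel))"
    using le f by (intro enn2real_mono) auto
  then show ?thesis by (simp add: enn2real_mult)
qed

lemma stepB:
  fixes b c z1 z2 :: real
  assumes bc: "b - c > 0" "b + c > 0" "c \<ge> 0" and uv: "z1 \<le> z2"
  shows "(\<integral>\<^sup>+q. ennreal (alpha b z1 q) * (\<integral>\<^sup>+s. ennreal (Aq b c q s) \<partial>lborel) \<partial>lborel)
         * (\<integral>\<^sup>+q. ennreal (alpha b z2 q) * (\<integral>\<^sup>+s. ennreal (Kq b q s) \<partial>lborel) \<partial>lborel)
       \<le> (\<integral>\<^sup>+q. ennreal (alpha b z2 q) * (\<integral>\<^sup>+s. ennreal (Aq b c q s) \<partial>lborel) \<partial>lborel)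
         * (\<integral>\<^sup>+q. ennreal (alpha b z1 q) * (\<integral>\<^sup>+s. ennreal (Kq b q s) \<partial>lborel) \<partial>lborel)"
proof -
  have b: "b > 0" using bc by simp
  define Pr where "Pr q = enn2real (\<integral>\<^sup>+s. ennreal (Aq b c q s) \<partial>lborel)" for q
  define Kr where "Kr q = enn2real (\<integral>\<^sup>+s. ennreal (Kq b q s) \<partial>lborel)" for q
  have Pr_meas[measurable]: "Pr \<in> borel_measurable borel" unfolding Pr_def by measurable
  have Kr_meas[measurable]: "Kr \<in> borel_measurable borel" unfolding Kr_def by measurable
  have Pr_nn: "Pr q \<ge> 0" for q unfolding Pr_def by simp
  have Kr_nn: "Kr q \<ge> 0" for q unfolding Kr_def by simp
  have Pr_e: "ennreal (Pr q) = (\<integral>\<^sup>+s. ennreal (Aq b c q s) \<partial>lborel)" for q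
    unfolding Pr_def using Aq_int_fin[OF bc(1,2), of q] by (simp add: ennreal_enn2real_if)
  have Kr_e: "ennreal (Kr q) = (\<integral>\<^sup>+s. ennreal (Kq b q s) \<partial>lborel)" for q
    unfolding Kr_def using Kq_int_fin[OF b, of q] by (simp add: ennreal_enn2real_if)
  have conv_e: "\<And>z (R :: real \<Rightarrow> real). (\<And>q. R q \<ge> 0) \<Longrightarrow>
      (\<integral>\<^sup>+q. ennreal (alpha b z q * R q) \<partial>lborel) = (\<integral>\<^sup>+q. ennreal (alpha b z q) * ennreal (R q) \<partial>lborel)"
    by (intro nn_integral_cong) (simp add: ennreal_mult' alpha_nonneg)
  have key: "0 \<le> (exp (-2*z2*x) * exp (-2*z1*y) - exp (-2*z1*x) * exp (-2*z2*y)) * (Pr x * Kr y - Pr y * Kr x)"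
    if "0 \<le> x" "x \<le> y" for x y
  proof (intro mult_nonneg_nonneg)
    have "(-2*z1*x) + (-2*z2*y) \<le> (-2*z2*x) + (-2*z1*y)"
    proof -
      have "0 \<le> (z2 - z1) * (y - x)" using uv that by simp
      then show ?thesis by (simp add: algebra_simps)
    qed
    then have "exp (-2*z1*x) * exp (-2*z2*y) \<le> exp (-2*z2*x) * exp (-2*z1*y)"
      by (simp add: exp_add[symmetric])
    then show "0 \<le> exp (-2*z2*x) * exp (-2*z1*y) - exp (-2*z1*x) * exp (-2*z2*y)" by simp
    show "0 \<le> Pr x * Kr y - Pr y * Kr x"
      using stepA_real[OF bc that] unfolding Pr_def Kr_def by simp
  qed
  have pt: "alpha b z1 x * Pr x * (alpha b z2 y * Kr y) + alpha b z1 y * Pr y * (alpha b z2 x * Kr x)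
     \<le> alpha b z2 x * Pr x * (alpha b z1 y * Kr y) + alpha b z2 y * Pr y * (alpha b z1 x * Kr x)" for x y
  proof (cases "0 < x \<and> 0 < y")
    case False
    then have "alpha b z x = 0 \<or> alpha b z' y = 0" for z z' unfolding alpha_def by (auto simp: indicator_def)
    then show ?thesis using False unfolding alpha_def by (auto simp: indicator_def)
  next
    case True
    define bx where "bx = x powr (2 * b - 1)"
    define by' where "by' = y powr (2 * b - 1)"
    have ax: "alpha b z x = exp (-2*z*x) * bx" for z using True unfolding alpha_def bx_def by simp
    have ay: "alpha b z y = exp (-2*z*y) * by'" for z using True unfolding alpha_def by'_def by simp
    have bpos: "bx \<ge> 0" "by' \<ge> 0" unfolding bx_def by'_def by simp_all
    have sym: "0 \<le> (exp (-2*z2*x) * exp (-2*z1*y) - exp (-2*z1*x) * exp (-2*z2*y)) * (Pr x * Kr y - Pr y * Kr x)"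
    proof (cases "x \<le> y")
      case True
      then show ?thesis using key[of x y] \<open>0 < x \<and> 0 < y\<close> by simp
    next
      case False
      then have "0 \<le> (exp (-2*z2*y) * exp (-2*z1*x) - exp (-2*z1*y) * exp (-2*z2*x)) * (Pr y * Kr x - Pr x * Kr y)"
        using key[of y x] \<open>0 < x \<and> 0 < y\<close> by simp
      also have "\<dots> = (exp (-2*z2*x) * exp (-2*z1*y) - exp (-2*z1*x) * exp (-2*z2*y)) * (Pr x * Kr y - Pr y * Kr x)"
        by (simp add: algebra_simps)
      finally show ?thesis .
    qed
    have "alpha b z2 x * Pr x * (alpha b z1 y * Kr y) + alpha b z2 y * Pr y * (alpha b z1 x * Kr x)
        - (alpha b z1 x * Pr x * (alpha b z2 y * Kr y) + alpha b z1 y * Pr y * (alpha b z2 x * Kr x))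
        = bx * by' * ((exp (-2*z2*x) * exp (-2*z1*y) - exp (-2*z1*x) * exp (-2*z2*y)) * (Pr x * Kr y - Pr y * Kr x))"
      unfolding ax ay by (simp add: algebra_simps)
    moreover have "bx * by' * ((exp (-2*z2*x) * exp (-2*z1*y) - exp (-2*z1*x) * exp (-2*z2*y)) * (Pr x * Kr y - Pr y * Kr x)) \<ge> 0"
      using bpos sym by simp
    ultimately show ?thesis by linarith
  qed
  have main: "(\<integral>\<^sup>+q. ennreal (alpha b z1 q * Pr q) \<partial>lborel) * (\<integral>\<^sup>+q. ennreal (alpha b z2 q * Kr q) \<partial>lborel)
    \<le> (\<integral>\<^sup>+q. ennreal (alpha b z2 q * Pr q) \<partial>lborel) * (\<integral>\<^sup>+q. ennreal (alpha b z1 q * Kr q) \<partial>lborel)"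
    by (rule sym_prod_le) (auto simp: pt alpha_nonneg Pr_nn Kr_nn)
  then show ?thesis
    unfolding conv_e[OF Pr_nn] conv_e[OF Kr_nn] Pr_e Kr_e .
qed

lemma hn_eq: "hermite_neg a z = (1 / Gamma a) * integral\<^sup>L lborel (gI a z)"
  unfolding hermite_neg_def set_lebesgue_integral_def gI_def by simp

theorem corollary9:
  fixes \<nu> c :: real
  assumes "\<nu> > 0" and "c > 0"
  shows "antimono
           (\<lambda>z. (hermite_neg (\<nu> + c) z)\<^sup>2 /
                 (hermite_neg \<nu> z * hermite_neg (\<nu> + 2 * c) z))"
proof (rule antimonoI)
  fix z1 z2 :: real
  assume uv: "z1 \<le> z2"
  define b where "b = \<nu> + c"
  have bc: "b - c > 0" "b + c > 0" "c \<ge> 0" using assms unfolding b_def by auto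
  have bb: "b > 0" using bc by simp
  have e1: "b - c = \<nu>" "b + c = \<nu> + 2 * c" unfolding b_def by simp_all
  define I where "I a z = integral\<^sup>L lborel (gI a z)" for a z
  have Ipos: "I a z > 0" if "a > 0" for a z unfolding I_def by (rule I_pos[OF that])
  have Ne: "(\<integral>\<^sup>+t. ennreal (gI a z t) \<partial>lborel) = ennreal (I a z)" if "a > 0" for a z
    unfolding I_def by (rule N_eq[OF that])
  have pairE: "(\<integral>\<^sup>+t. ennreal (gI a z t) \<partial>lborel) * (\<integral>\<^sup>+t. ennreal (gI d z t) \<partial>lborel)
      + (\<integral>\<^sup>+t. ennreal (gI d z t) \<partial>lborel) * (\<integral>\<^sup>+t. ennreal (gI a z t) \<partial>lborel)
      = ennreal (2 * (I a z * I d z))" if "a > 0" "d > 0" for a d z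
  proof -
    have "ennreal (I a z) * ennreal (I d z) + ennreal (I d z) * ennreal (I a z)
        = ennreal (I a z * I d z) + ennreal (I a z * I d z)"
      using Ipos[OF that(1), of z] Ipos[OF that(2), of z] by (simp add: ennreal_mult'[symmetric] mult.commute)
    also have "\<dots> = ennreal (2 * (I a z * I d z))"
      using Ipos[OF that(1), of z] Ipos[OF that(2), of z] by (simp add: ennreal_plus[symmetric] del: ennreal_plus)
    finally show ?thesis using Ne that by simp
  qed
  have ineq: "ennreal (2 * (I (b - c) z1 * I (b + c) z1)) * ennreal (2 * (I b z2 * I b z2))
     \<le> ennreal (2 * (I (b - c) z2 * I (b + c) z2)) * ennreal (2 * (I b z1 * I b z1))"
    using stepB[OF bc uv] unfolding A_eq[symmetric] B_eq[symmetric] pairE[OF bc(1,2)] pairE[OF bb bb] .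
  have pos: "I (b - c) z > 0" "I (b + c) z > 0" "I b z > 0" for z using Ipos bc bb by auto
  have ineqr: "(2 * (I (b - c) z1 * I (b + c) z1)) * (2 * (I b z2 * I b z2))
     \<le> (2 * (I (b - c) z2 * I (b + c) z2)) * (2 * (I b z1 * I b z1))"
    using ineq pos[of z1] pos[of z2] by (simp add: ennreal_mult'[symmetric] ennreal_le_iff del: ennreal_mult_le_mult_iff)
  then have r: "I b z2 * I b z2 * (I (b - c) z1 * I (b + c) z1) \<le> I b z1 * I b z1 * (I (b - c) z2 * I (b + c) z2)"
    by (simp add: algebra_simps)
  have G: "Gamma (b - c) > 0" "Gamma (b + c) > 0" "Gamma b > 0" using bc bb by (auto intro: Gamma_real_pos)
  have hz: "(hermite_neg (\<nu> + c) z)\<^sup>2 / (hermite_neg \<nu> z * hermite_neg (\<nu> + 2 * c) z)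
      = (Gamma (b - c) * Gamma (b + c) / (Gamma b * Gamma b)) * (I b z * I b z / (I (b - c) z * I (b + c) z))" for z
    unfolding e1[symmetric] hn_eq I_def[symmetric] b_def[symmetric] using G pos[of z]
    by (simp add: field_simps power2_eq_square)
  have "I b z2 * I b z2 / (I (b - c) z2 * I (b + c) z2) \<le> I b z1 * I b z1 / (I (b - c) z1 * I (b + c) z1)"
    using r pos[of z1] pos[of z2] by (simp add: divide_simps mult_pos_pos)
  then show "(hermite_neg (\<nu> + c) z2)\<^sup>2 / (hermite_neg \<nu> z2 * hermite_neg (\<nu> + 2 * c) z2)
          \<le> (hermite_neg (\<nu> + c) z1)\<^sup>2 / (hermite_neg \<nu> z1 * hermite_neg (\<nu> + 2 * c) z1)"
    unfolding hz using G by (intro mult_left_mono) (auto intro: divide_nonneg_pos)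
qed

end
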